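(* For integers $0\le\ell\le2n$ and $m$, let $q_{\ell,m,2n}$ be the weighted number of paths in the class $\mathcal{C}$ from $(\ell,m)$ to $(2n,0)$. Then \[ \frac{q_{\ell,j,2n}}{j+1}\ge\frac{q_{\ell,k,2n}}{k+1} \] for all integers $0\le j<k\le\ell\le2n$ with $k-j$ even and $n\ge10$.
   Context: The class $\mathcal{C}$ consists of lattice paths with steps in $\{(1,1),(1,-1),(2,-2),(3,-1),(3,1)\}$ never going below $y=0$, weighted as follows: a step ending at the point $(a,b)$ has weight $\frac{a-b+2}{a+b}$ if it is $(1,1)$, $\frac{a-b-2}{a-b}$ if it is $(1,-1)$, $\frac{2}{a-b}$ if it is $(2,-2)$, $\frac{2}{a+b}$ if it is $(3,-1)$, and $\frac{4}{(a+b)(a+b-2)}$ if it is $(3,1)$; the weight of a path is the product of its step weights. Equivalently, $q_{\ell,m,2n}=0$ if $m<0$ or $\ell>2n$, $q_{2n,m,2n}=\delta_{m,0}$, and for $\ell<2n$, $m\ge0$: \[ q_{\ell,m,2n}=\tfrac{\ell-m}{\ell-m+2}q_{\ell+1,m-1,2n}+\tfrac{\ell-m+2}{\ell+m+2}q_{\ell+1,m+1,2n}+\tfrac{2}{\ell-m+4}q_{\ell+2,m-2,2n}+\tfrac{2}{\ell+m+2}q_{\ell+3,m-1,2n}+\tfrac{4}{(\ell+m+4)(\ell+m+2)}q_{\ell+3,m+1,2n}. \] *)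

theory Defs
  imports Complex_Main
begin

function qC :: "nat \<Rightarrow> int \<Rightarrow> nat \<Rightarrow> real" where
  "qC l m n =
    (if m < 0 \<or> l > 2 * n then 0
     else if l = 2 * n then (if m = 0 then 1 else 0)
     else
       (let L = int l in
          real_of_int (L - m) / real_of_int (L - m + 2) * qC (l + 1) (m - 1) n
        + real_of_int (L - m + 2) / real_of_int (L + m + 2) * qC (l + 1) (m + 1) n
        + 2 / real_of_int (L - m + 4) * qC (l + 2) (m - 2) n
        + 2 / real_of_int (L + m + 2) * qC (l + 3) (m - 1) n
        + 4 / (real_of_int (L + m + 4) * real_of_int (L + m + 2)) * qC (l + 3) (m + 1) n))"
  by pat_completeness auto
termination
  by (relation "measure (\<lambda>(l, m, n). 2 * n - l)") auto

end

theory Submission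
  imports Defs
begin

declare qC.simps[simp del]

lemma qC_neg: "m < 0 \<Longrightarrow> qC l m n = 0"
  by (subst qC.simps) simp

lemma qC_big: "l > 2*n \<Longrightarrow> qC l m n = 0"
  by (subst qC.simps) simp

lemma qC_top: "qC (2*n) m n = (if m = 0 then 1 else 0)"
  by (subst qC.simps) simp

lemma qC_rec:
  assumes "0 \<le> m" "l < 2*n"
  shows "qC l m n =
          real_of_int (int l - m) / real_of_int (int l - m + 2) * qC (l + 1) (m - 1) n
        + real_of_int (int l - m + 2) / real_of_int (int l + m + 2) * qC (l + 1) (m + 1) n
        + 2 / real_of_int (int l - m + 4) * qC (l + 2) (m - 2) n
        + 2 / real_of_int (int l + m + 2) * qC (l + 3) (m - 1) n
        + 4 / (real_of_int (int l + m + 4) * real_of_int (int l + m + 2)) * qC (l + 3) (m + 1) n"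
  using assms by (subst qC.simps) (simp add: Let_def)

lemma qC_nonneg: "m \<le> int l \<Longrightarrow> 0 \<le> qC l m n"
proof (induction l m n rule: qC.induct)
  case (1 l m n)
  show ?case
  proof (cases "m < 0 \<or> l > 2*n")
    case True then show ?thesis using qC_neg qC_big by auto
  next
    case False
    show ?thesis
    proof (cases "l = 2*n")
      case True then show ?thesis by (simp add: qC_top)
    next
      case F2: False
      have lt: "l < 2*n" using False F2 by auto
      have m0: "0 \<le> m" using False by auto
      have i1: "0 \<le> qC (l + 1) (m - 1) n" using 1(1)[of "int l"] False F2 1(6) by (simp add: Let_def)
      have i2: "0 \<le> qC (l + 1) (m + 1) n" using 1(2)[of "int l"] False F2 1(6) by (simp add: Let_def)
      have i3: "0 \<le> qC (l + 2) (m - 2) n" using 1(3)[of "int l"] False F2 1(6) by (simp add: Let_def)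
      have i4: "0 \<le> qC (l + 3) (m - 1) n" using 1(4)[of "int l"] False F2 1(6) by (simp add: Let_def)
      have i5: "0 \<le> qC (l + 3) (m + 1) n" using 1(5)[of "int l"] False F2 1(6) by (simp add: Let_def)
      have c1: "0 \<le> real_of_int (int l - m) / real_of_int (int l - m + 2)" using 1(6) by simp
      have c2: "0 \<le> real_of_int (int l - m + 2) / real_of_int (int l + m + 2)" using 1(6) m0 by simp
      have c3: "0 \<le> 2 / real_of_int (int l - m + 4)" using 1(6) by simp
      have c4: "0 \<le> 2 / real_of_int (int l + m + 2)" using m0 by simp
      have c5: "0 \<le> 4 / (real_of_int (int l + m + 4) * real_of_int (int l + m + 2))" using m0 by simp
      show ?thesis unfolding qC_rec[OF m0 lt]
        using i1 i2 i3 i4 i5 c1 c2 c3 c4 c5 by (intro add_nonneg_nonneg mult_nonneg_nonneg) auto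
    qed
  qed
qed

lemma domA:
  assumes m0: "0 \<le> m" and ml: "m \<le> int l"
  shows "real_of_int (int l - m) * qC (l+1) (m-1) n \<le> real_of_int (int l - m + 2) * qC l m n"
proof (cases "l < 2*n")
  case True
  define c1 where "c1 = real_of_int (int l - m) / real_of_int (int l - m + 2)"
  define R where "R = real_of_int (int l - m + 2) / real_of_int (int l + m + 2) * qC (l + 1) (m + 1) n
        + 2 / real_of_int (int l - m + 4) * qC (l + 2) (m - 2) n
        + 2 / real_of_int (int l + m + 2) * qC (l + 3) (m - 1) n
        + 4 / (real_of_int (int l + m + 4) * real_of_int (int l + m + 2)) * qC (l + 3) (m + 1) n"
  have R0: "0 \<le> R" unfolding R_def using m0 ml
    by (intro add_nonneg_nonneg mult_nonneg_nonneg qC_nonneg) auto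
  have q: "qC l m n = c1 * qC (l+1) (m-1) n + R"
    unfolding c1_def R_def qC_rec[OF m0 True] by simp
  have pos: "0 < real_of_int (int l - m + 2)" using ml by simp
  have pc: "real_of_int (int l - m + 2) * c1 = real_of_int (int l - m)" unfolding c1_def using pos by simp
  have "real_of_int (int l - m + 2) * qC l m n = (real_of_int (int l - m + 2) * c1) * qC (l+1) (m-1) n + real_of_int (int l - m + 2) * R"
    unfolding q by (simp add: algebra_simps)
  hence "real_of_int (int l - m + 2) * qC l m n = real_of_int (int l - m) * qC (l+1) (m-1) n + real_of_int (int l - m + 2) * R"
    unfolding pc .
  moreover have "0 \<le> real_of_int (int l - m + 2) * R" using pos R0 by simp
  ultimately show ?thesis by linarith
next
  case False
  hence "qC (l+1) (m-1) n = 0" by (intro qC_big) auto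
  moreover have "0 \<le> qC l m n" using ml by (rule qC_nonneg)
  moreover have "0 \<le> real_of_int (int l - m + 2)" using ml by simp
  ultimately show ?thesis by simp
qed

lemma domB:
  assumes m0: "0 \<le> m" and ml: "m \<le> int l"
  shows "real_of_int (int l - m + 2) * qC (l+1) (m+1) n \<le> real_of_int (int l + m + 2) * qC l m n"
proof (cases "l < 2*n")
  case True
  define c2 where "c2 = real_of_int (int l - m + 2) / real_of_int (int l + m + 2)"
  define R where "R = real_of_int (int l - m) / real_of_int (int l - m + 2) * qC (l + 1) (m - 1) n
        + 2 / real_of_int (int l - m + 4) * qC (l + 2) (m - 2) n
        + 2 / real_of_int (int l + m + 2) * qC (l + 3) (m - 1) n
        + 4 / (real_of_int (int l + m + 4) * real_of_int (int l + m + 2)) * qC (l + 3) (m + 1) n"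
  have R0: "0 \<le> R" unfolding R_def using m0 ml
    by (intro add_nonneg_nonneg mult_nonneg_nonneg qC_nonneg divide_nonneg_nonneg) auto
  have q: "qC l m n = c2 * qC (l+1) (m+1) n + R"
    unfolding c2_def R_def qC_rec[OF m0 True] by simp
  have pos: "0 < real_of_int (int l + m + 2)" using m0 by simp
  have pc: "real_of_int (int l + m + 2) * c2 = real_of_int (int l - m + 2)" unfolding c2_def using pos by simp
  have "real_of_int (int l + m + 2) * qC l m n = (real_of_int (int l + m + 2) * c2) * qC (l+1) (m+1) n + real_of_int (int l + m + 2) * R"
    unfolding q by (simp add: algebra_simps)
  hence "real_of_int (int l + m + 2) * qC l m n = real_of_int (int l - m + 2) * qC (l+1) (m+1) n + real_of_int (int l + m + 2) * R"
    unfolding pc .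
  moreover have "0 \<le> real_of_int (int l + m + 2) * R" using pos R0 by simp
  ultimately show ?thesis by linarith
next
  case False
  hence "qC (l+1) (m+1) n = 0" by (intro qC_big) auto
  moreover have "0 \<le> qC l m n" using ml by (rule qC_nonneg)
  moreover have "0 \<le> real_of_int (int l + m + 2)" using m0 by simp
  ultimately show ?thesis by simp
qed


lemma aux_ge0: fixes X D :: real shows "0 \<le> X*D \<Longrightarrow> 0 < D \<Longrightarrow> 0 \<le> X"
  by (metis not_le mult_neg_pos)

lemma aux_le0: fixes X D :: real shows "X*D \<le> 0 \<Longrightarrow> 0 < D \<Longrightarrow> X \<le> 0"
  by (metis not_le mult_pos_pos)

lemma K1:
  fixes M L c1 c2 d1 d2 w1 w2 c3 w3 k2 d3 G k3 :: real
  assumes "1 \<le> M" and "M + 2 \<le> L"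
    and eqs: "c1*(L-M+2) = L-M" "c2*(L+M+2) = L-M+2" "d1*(L-M) = L-M-2" "d2*(L+M+4) = L-M" "w1*(M+2) = M" "w2*(M+2) = M+4" "c3*(L-M+4) = 2" "w3*(M+1) = M-1" "k2*(L-M) = L-M+2" "d3*(L-M+2) = 2" "G*((L+M+2)*(L+M+4)*(M+2)) = 4*(L-M+2)" "k3*(L-M) = L+M+4"
  shows "0 \<le> (M+3)*c1*w1 + (M+3)*c2 - (M+1)*d1 - (M+1)*d2*w2 + (M+3)*c3*w3*k2 - (M+1)*d3*k2 - G*k3"
proof -
  define u :: real where "u = M - 1"
  define t :: real where "t = L - M - 2"
  have u: "0 \<le> u" and t: "0 \<le> t" using assms(1,2) by (auto simp: u_def t_def)
  have uM: "M = u + 1" and tL: "L = u + t + 3" using assms(1) by (auto simp: u_def t_def)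
  have D0: "0 < (L - M + 2)*(M + 2)*(L + M + 2)*(L - M)*(L + M + 4)*(L - M + 4)*(M + 1)" using assms(1,2) by (intro mult_pos_pos) auto
  have t0: "(M+3)*c1*w1 * ((L - M + 2)*(M + 2)*(L + M + 2)*(L - M)*(L + M + 4)*(L - M + 4)*(M + 1)) = (M + 3)*(L - M)*(M)*(L + M + 2)*(L - M)*(L + M + 4)*(L - M + 4)*(M + 1)"
  proof -
    have "(M+3)*c1*w1 * ((L - M + 2)*(M + 2)*(L + M + 2)*(L - M)*(L + M + 4)*(L - M + 4)*(M + 1)) = (M+3)*(c1*(L-M+2))*(w1*(M+2))*(L + M + 2)*(L - M)*(L + M + 4)*(L - M + 4)*(M + 1)" by (simp only: mult_ac)
    also have "\<dots> = (M + 3)*(L - M)*(M)*(L + M + 2)*(L - M)*(L + M + 4)*(L - M + 4)*(M + 1)" unfolding eqs(1) eqs(5) by (simp only: mult_ac)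
    finally show ?thesis .
  qed
  have t1: "(M+3)*c2 * ((L - M + 2)*(M + 2)*(L + M + 2)*(L - M)*(L + M + 4)*(L - M + 4)*(M + 1)) = (M + 3)*(L - M + 2)*(L - M + 2)*(M + 2)*(L - M)*(L + M + 4)*(L - M + 4)*(M + 1)"
  proof -
    have "(M+3)*c2 * ((L - M + 2)*(M + 2)*(L + M + 2)*(L - M)*(L + M + 4)*(L - M + 4)*(M + 1)) = (M+3)*(c2*(L+M+2))*(L - M + 2)*(M + 2)*(L - M)*(L + M + 4)*(L - M + 4)*(M + 1)" by (simp only: mult_ac)
    also have "\<dots> = (M + 3)*(L - M + 2)*(L - M + 2)*(M + 2)*(L - M)*(L + M + 4)*(L - M + 4)*(M + 1)" unfolding eqs(2) by (simp only: mult_ac)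
    finally show ?thesis .
  qed
  have t2: "(M+1)*d1 * ((L - M + 2)*(M + 2)*(L + M + 2)*(L - M)*(L + M + 4)*(L - M + 4)*(M + 1)) = (M + 1)*(L - M - 2)*(L - M + 2)*(M + 2)*(L + M + 2)*(L + M + 4)*(L - M + 4)*(M + 1)"
  proof -
    have "(M+1)*d1 * ((L - M + 2)*(M + 2)*(L + M + 2)*(L - M)*(L + M + 4)*(L - M + 4)*(M + 1)) = (M+1)*(d1*(L-M))*(L - M + 2)*(M + 2)*(L + M + 2)*(L + M + 4)*(L - M + 4)*(M + 1)" by (simp only: mult_ac)
    also have "\<dots> = (M + 1)*(L - M - 2)*(L - M + 2)*(M + 2)*(L + M + 2)*(L + M + 4)*(L - M + 4)*(M + 1)" unfolding eqs(3) by (simp only: mult_ac)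
    finally show ?thesis .
  qed
  have t3: "(M+1)*d2*w2 * ((L - M + 2)*(M + 2)*(L + M + 2)*(L - M)*(L + M + 4)*(L - M + 4)*(M + 1)) = (M + 1)*(L - M)*(M + 4)*(L - M + 2)*(L + M + 2)*(L - M)*(L - M + 4)*(M + 1)"
  proof -
    have "(M+1)*d2*w2 * ((L - M + 2)*(M + 2)*(L + M + 2)*(L - M)*(L + M + 4)*(L - M + 4)*(M + 1)) = (M+1)*(d2*(L+M+4))*(w2*(M+2))*(L - M + 2)*(L + M + 2)*(L - M)*(L - M + 4)*(M + 1)" by (simp only: mult_ac)
    also have "\<dots> = (M + 1)*(L - M)*(M + 4)*(L - M + 2)*(L + M + 2)*(L - M)*(L - M + 4)*(M + 1)" unfolding eqs(4) eqs(6) by (simp only: mult_ac)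
    finally show ?thesis .
  qed
  have t4: "(M+3)*c3*w3*k2 * ((L - M + 2)*(M + 2)*(L + M + 2)*(L - M)*(L + M + 4)*(L - M + 4)*(M + 1)) = 2*(M + 3)*(M - 1)*(L - M + 2)*(L - M + 2)*(M + 2)*(L + M + 2)*(L + M + 4)"
  proof -
    have "(M+3)*c3*w3*k2 * ((L - M + 2)*(M + 2)*(L + M + 2)*(L - M)*(L + M + 4)*(L - M + 4)*(M + 1)) = (M+3)*(c3*(L-M+4))*(w3*(M+1))*(k2*(L-M))*(L - M + 2)*(M + 2)*(L + M + 2)*(L + M + 4)" by (simp only: mult_ac)
    also have "\<dots> = 2*(M + 3)*(M - 1)*(L - M + 2)*(L - M + 2)*(M + 2)*(L + M + 2)*(L + M + 4)" unfolding eqs(7) eqs(8) eqs(9) by (simp only: mult_ac)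
    finally show ?thesis .
  qed
  have t5: "(M+1)*d3*k2 * ((L - M + 2)*(M + 2)*(L + M + 2)*(L - M)*(L + M + 4)*(L - M + 4)*(M + 1)) = 2*(M + 1)*(L - M + 2)*(M + 2)*(L + M + 2)*(L + M + 4)*(L - M + 4)*(M + 1)"
  proof -
    have "(M+1)*d3*k2 * ((L - M + 2)*(M + 2)*(L + M + 2)*(L - M)*(L + M + 4)*(L - M + 4)*(M + 1)) = (M+1)*(d3*(L-M+2))*(k2*(L-M))*(M + 2)*(L + M + 2)*(L + M + 4)*(L - M + 4)*(M + 1)" by (simp only: mult_ac)
    also have "\<dots> = 2*(M + 1)*(L - M + 2)*(M + 2)*(L + M + 2)*(L + M + 4)*(L - M + 4)*(M + 1)" unfolding eqs(9) eqs(10) by (simp only: mult_ac)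
    finally show ?thesis .
  qed
  have t6: "G*k3 * ((L - M + 2)*(M + 2)*(L + M + 2)*(L - M)*(L + M + 4)*(L - M + 4)*(M + 1)) = 4*(L - M + 2)*(L + M + 4)*(L - M + 2)*(L - M + 4)*(M + 1)"
  proof -
    have "G*k3 * ((L - M + 2)*(M + 2)*(L + M + 2)*(L - M)*(L + M + 4)*(L - M + 4)*(M + 1)) = (G*((L+M+2)*(L+M+4)*(M+2)))*(k3*(L-M))*(L - M + 2)*(L - M + 4)*(M + 1)" by (simp only: mult_ac)
    also have "\<dots> = 4*(L - M + 2)*(L + M + 4)*(L - M + 2)*(L - M + 4)*(M + 1)" unfolding eqs(11) eqs(12) by (simp only: mult_ac)
    finally show ?thesis .
  qed
  have ps: "((M + 3)*(L - M)*(M)*(L + M + 2)*(L - M)*(L + M + 4)*(L - M + 4)*(M + 1)) + ((M + 3)*(L - M + 2)*(L - M + 2)*(M + 2)*(L - M)*(L + M + 4)*(L - M + 4)*(M + 1)) - ((M + 1)*(L - M - 2)*(L - M + 2)*(M + 2)*(L + M + 2)*(L + M + 4)*(L - M + 4)*(M + 1)) - ((M + 1)*(L - M)*(M + 4)*(L - M + 2)*(L + M + 2)*(L - M)*(L - M + 4)*(M + 1)) + (2*(M + 3)*(M - 1)*(L - M + 2)*(L - M + 2)*(M + 2)*(L + M + 2)*(L + M + 4)) - (2*(M + 1)*(L - M + 2)*(M + 2)*(L + M + 2)*(L + M + 4)*(L - M + 4)*(M + 1)) - (4*(L - M + 2)*(L + M + 4)*(L - M + 2)*(L - M + 4)*(M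 + 1)) = (768 + 4544*t + 3040*t*t + 672*t*t*t + 48*t*t*t*t + 13824*u + 15072*u*t + 6592*u*t*t + 1200*u*t*t*t + 76*u*t*t*t*t + 13056*u*u + 10272*u*u*t + 3688*u*u*t*t + 580*u*u*t*t*t + 32*u*u*t*t*t*t + 4448*u*u*u + 2512*u*u*u*t + 744*u*u*u*t*t + 96*u*u*u*t*t*t + 4*u*u*u*t*t*t*t + 640*u*u*u*u + 208*u*u*u*u*t + 48*u*u*u*u*t*t + 4*u*u*u*u*t*t*t + 32*u*u*u*u*u)"
    unfolding uM tL by algebra
  have key: "((M+3)*c1*w1 + (M+3)*c2 - (M+1)*d1 - (M+1)*d2*w2 + (M+3)*c3*w3*k2 - (M+1)*d3*k2 - G*k3) * ((L - M + 2)*(M + 2)*(L + M + 2)*(L - M)*(L + M + 4)*(L - M + 4)*(M + 1)) = (768 + 4544*t + 3040*t*t + 672*t*t*t + 48*t*t*t*t + 13824*u + 15072*u*t + 6592*u*t*t + 1200*u*t*t*t + 76*u*t*t*t*t + 13056*u*u + 10272*u*u*t + 3688*u*u*t*t + 580*u*u*t*t*t + 32*u*u*t*t*t*t + 4448*u*u*u + 2512*u*u*u*t + 744*u*u*u*t*t + 96*u*u*u*t*t*t + 4*u*u*u*t*t*t*t + 640*u*u*u*u + 208*u*u*u*u*t + 48*u*u*u*u*t*t + 4*u*u*u*u*t*t*t + 32*u*u*u*u*u)"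
    unfolding ps[symmetric] t0[symmetric] t1[symmetric] t2[symmetric] t3[symmetric] t4[symmetric] t5[symmetric] t6[symmetric] by (simp only: distrib_right left_diff_distrib)
  have nn: "0 \<le> 768 + 4544*t + 3040*t*t + 672*t*t*t + 48*t*t*t*t + 13824*u + 15072*u*t + 6592*u*t*t + 1200*u*t*t*t + 76*u*t*t*t*t + 13056*u*u + 10272*u*u*t + 3688*u*u*t*t + 580*u*u*t*t*t + 32*u*u*t*t*t*t + 4448*u*u*u + 2512*u*u*u*t + 744*u*u*u*t*t + 96*u*u*u*t*t*t + 4*u*u*u*t*t*t*t + 640*u*u*u*u + 208*u*u*u*u*t + 48*u*u*u*u*t*t + 4*u*u*u*u*t*t*t + 32*u*u*u*u*u"
    using u t by (intro add_nonneg_nonneg mult_nonneg_nonneg) auto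
  have "0 \<le> ((M+3)*c1*w1 + (M+3)*c2 - (M+1)*d1 - (M+1)*d2*w2 + (M+3)*c3*w3*k2 - (M+1)*d3*k2 - G*k3) * ((L - M + 2)*(M + 2)*(L + M + 2)*(L - M)*(L + M + 4)*(L - M + 4)*(M + 1))" unfolding key by (rule nn)
  thus ?thesis using D0 by (rule aux_ge0)
qed

lemma K1z:
  fixes M L c1 c2 d1 d2 w1 w2 k2 d3 G k3 :: real
  assumes "M = 0" and "M + 2 \<le> L"
    and eqs: "c1*(L-M+2) = L-M" "c2*(L+M+2) = L-M+2" "d1*(L-M) = L-M-2" "d2*(L+M+4) = L-M" "w1*(M+2) = M" "w2*(M+2) = M+4" "k2*(L-M) = L-M+2" "d3*(L-M+2) = 2" "G*((L+M+2)*(L+M+4)*(M+2)) = 4*(L-M+2)" "k3*(L-M) = L+M+4"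
  shows "0 \<le> (M+3)*c1*w1 + (M+3)*c2 - (M+1)*d1 - (M+1)*d2*w2 - (M+1)*d3*k2 - G*k3"
proof -
  define u :: real where "u = M"
  define t :: real where "t = L - M - 2"
  have u: "0 \<le> u" and t: "0 \<le> t" using assms(1,2) by (auto simp: u_def t_def)
  have uM: "M = 0" and tL: "L = t + 2" using assms(1) by (auto simp: u_def t_def)
  have D0: "0 < (L - M + 2)*(M + 2)*(L + M + 2)*(L - M)*(L + M + 4)" using assms(1,2) by (intro mult_pos_pos) auto
  have t0: "(M+3)*c1*w1 * ((L - M + 2)*(M + 2)*(L + M + 2)*(L - M)*(L + M + 4)) = (M + 3)*(L - M)*(M)*(L + M + 2)*(L - M)*(L + M + 4)"
  proof -
    have "(M+3)*c1*w1 * ((L - M + 2)*(M + 2)*(L + M + 2)*(L - M)*(L + M + 4)) = (M+3)*(c1*(L-M+2))*(w1*(M+2))*(L + M + 2)*(L - M)*(L + M + 4)" by (simp only: mult_ac)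
    also have "\<dots> = (M + 3)*(L - M)*(M)*(L + M + 2)*(L - M)*(L + M + 4)" unfolding eqs(1) eqs(5) by (simp only: mult_ac)
    finally show ?thesis .
  qed
  have t1: "(M+3)*c2 * ((L - M + 2)*(M + 2)*(L + M + 2)*(L - M)*(L + M + 4)) = (M + 3)*(L - M + 2)*(L - M + 2)*(M + 2)*(L - M)*(L + M + 4)"
  proof -
    have "(M+3)*c2 * ((L - M + 2)*(M + 2)*(L + M + 2)*(L - M)*(L + M + 4)) = (M+3)*(c2*(L+M+2))*(L - M + 2)*(M + 2)*(L - M)*(L + M + 4)" by (simp only: mult_ac)
    also have "\<dots> = (M + 3)*(L - M + 2)*(L - M + 2)*(M + 2)*(L - M)*(L + M + 4)" unfolding eqs(2) by (simp only: mult_ac)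
    finally show ?thesis .
  qed
  have t2: "(M+1)*d1 * ((L - M + 2)*(M + 2)*(L + M + 2)*(L - M)*(L + M + 4)) = (M + 1)*(L - M - 2)*(L - M + 2)*(M + 2)*(L + M + 2)*(L + M + 4)"
  proof -
    have "(M+1)*d1 * ((L - M + 2)*(M + 2)*(L + M + 2)*(L - M)*(L + M + 4)) = (M+1)*(d1*(L-M))*(L - M + 2)*(M + 2)*(L + M + 2)*(L + M + 4)" by (simp only: mult_ac)
    also have "\<dots> = (M + 1)*(L - M - 2)*(L - M + 2)*(M + 2)*(L + M + 2)*(L + M + 4)" unfolding eqs(3) by (simp only: mult_ac)
    finally show ?thesis .
  qed
  have t3: "(M+1)*d2*w2 * ((L - M + 2)*(M + 2)*(L + M + 2)*(L - M)*(L + M + 4)) = (M + 1)*(L - M)*(M + 4)*(L - M + 2)*(L + M + 2)*(L - M)"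
  proof -
    have "(M+1)*d2*w2 * ((L - M + 2)*(M + 2)*(L + M + 2)*(L - M)*(L + M + 4)) = (M+1)*(d2*(L+M+4))*(w2*(M+2))*(L - M + 2)*(L + M + 2)*(L - M)" by (simp only: mult_ac)
    also have "\<dots> = (M + 1)*(L - M)*(M + 4)*(L - M + 2)*(L + M + 2)*(L - M)" unfolding eqs(4) eqs(6) by (simp only: mult_ac)
    finally show ?thesis .
  qed
  have t4: "(M+1)*d3*k2 * ((L - M + 2)*(M + 2)*(L + M + 2)*(L - M)*(L + M + 4)) = 2*(M + 1)*(L - M + 2)*(M + 2)*(L + M + 2)*(L + M + 4)"
  proof -
    have "(M+1)*d3*k2 * ((L - M + 2)*(M + 2)*(L + M + 2)*(L - M)*(L + M + 4)) = (M+1)*(d3*(L-M+2))*(k2*(L-M))*(M + 2)*(L + M + 2)*(L + M + 4)" by (simp only: mult_ac)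
    also have "\<dots> = 2*(M + 1)*(L - M + 2)*(M + 2)*(L + M + 2)*(L + M + 4)" unfolding eqs(7) eqs(8) by (simp only: mult_ac)
    finally show ?thesis .
  qed
  have t5: "G*k3 * ((L - M + 2)*(M + 2)*(L + M + 2)*(L - M)*(L + M + 4)) = 4*(L - M + 2)*(L + M + 4)*(L - M + 2)"
  proof -
    have "G*k3 * ((L - M + 2)*(M + 2)*(L + M + 2)*(L - M)*(L + M + 4)) = (G*((L+M+2)*(L+M+4)*(M+2)))*(k3*(L-M))*(L - M + 2)" by (simp only: mult_ac)
    also have "\<dots> = 4*(L - M + 2)*(L + M + 4)*(L - M + 2)" unfolding eqs(9) eqs(10) by (simp only: mult_ac)
    finally show ?thesis .
  qed
  have ps: "((M + 3)*(L - M)*(M)*(L + M + 2)*(L - M)*(L + M + 4)) + ((M + 3)*(L - M + 2)*(L - M + 2)*(M + 2)*(L - M)*(L + M + 4)) - ((M + 1)*(L - M - 2)*(L - M + 2)*(M + 2)*(L + M + 2)*(L + M + 4)) - ((M + 1)*(L - M)*(M + 4)*(L - M + 2)*(L + M + 2)*(L - M)) - (2*(M + 1)*(L - M + 2)*(M + 2)*(L + M + 2)*(L + M + 4)) - (4*(L - M + 2)*(L + M + 4)*(L - M + 2)) = (128 + 256*t + 104*t*t + 12*t*t*t)"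
    unfolding uM tL by algebra
  have key: "((M+3)*c1*w1 + (M+3)*c2 - (M+1)*d1 - (M+1)*d2*w2 - (M+1)*d3*k2 - G*k3) * ((L - M + 2)*(M + 2)*(L + M + 2)*(L - M)*(L + M + 4)) = (128 + 256*t + 104*t*t + 12*t*t*t)"
    unfolding ps[symmetric] t0[symmetric] t1[symmetric] t2[symmetric] t3[symmetric] t4[symmetric] t5[symmetric] by (simp only: distrib_right left_diff_distrib)
  have nn: "0 \<le> 128 + 256*t + 104*t*t + 12*t*t*t"
    using u t by (intro add_nonneg_nonneg mult_nonneg_nonneg) auto
  have "0 \<le> ((M+3)*c1*w1 + (M+3)*c2 - (M+1)*d1 - (M+1)*d2*w2 - (M+1)*d3*k2 - G*k3) * ((L - M + 2)*(M + 2)*(L + M + 2)*(L - M)*(L + M + 4))" unfolding key by (rule nn)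
  thus ?thesis using D0 by (rule aux_ge0)
qed

lemma K2:
  fixes M L c4 w1 c5 d4 d5 w2 G :: real
  assumes "0 \<le> M" and "M + 2 \<le> L"
    and eqs: "c4*(L+M+2) = 2" "w1*(M+2) = M" "c5*((L+M+4)*(L+M+2)) = 4" "d4*(L+M+4) = 2" "d5*((L+M+6)*(L+M+4)) = 4" "w2*(M+2) = M+4" "G*((L+M+2)*(L+M+4)*(M+2)) = 4*(L-M+2)"
  shows "0 \<le> (M+3)*c4*w1 + (M+3)*c5 - (M+1)*d4 - (M+1)*d5*w2 + G"
proof -
  define u :: real where "u = M"
  define t :: real where "t = L - M - 2"
  have u: "0 \<le> u" and t: "0 \<le> t" using assms(1,2) by (auto simp: u_def t_def)
  have uM: "M = u" and tL: "L = u + t + 2" using assms(1) by (auto simp: u_def t_def)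
  have D0: "0 < (L + M + 2)*(M + 2)*(L + M + 4)*(L + M + 6)" using assms(1,2) by (intro mult_pos_pos) auto
  have t0: "(M+3)*c4*w1 * ((L + M + 2)*(M + 2)*(L + M + 4)*(L + M + 6)) = 2*(M + 3)*(M)*(L + M + 4)*(L + M + 6)"
  proof -
    have "(M+3)*c4*w1 * ((L + M + 2)*(M + 2)*(L + M + 4)*(L + M + 6)) = (M+3)*(c4*(L+M+2))*(w1*(M+2))*(L + M + 4)*(L + M + 6)" by (simp only: mult_ac)
    also have "\<dots> = 2*(M + 3)*(M)*(L + M + 4)*(L + M + 6)" unfolding eqs(1) eqs(2) by (simp only: mult_ac)
    finally show ?thesis .
  qed
  have t1: "(M+3)*c5 * ((L + M + 2)*(M + 2)*(L + M + 4)*(L + M + 6)) = 4*(M + 3)*(M + 2)*(L + M + 6)"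
  proof -
    have "(M+3)*c5 * ((L + M + 2)*(M + 2)*(L + M + 4)*(L + M + 6)) = (M+3)*(c5*((L+M+4)*(L+M+2)))*(M + 2)*(L + M + 6)" by (simp only: mult_ac)
    also have "\<dots> = 4*(M + 3)*(M + 2)*(L + M + 6)" unfolding eqs(3) by (simp only: mult_ac)
    finally show ?thesis .
  qed
  have t2: "(M+1)*d4 * ((L + M + 2)*(M + 2)*(L + M + 4)*(L + M + 6)) = 2*(M + 1)*(L + M + 2)*(M + 2)*(L + M + 6)"
  proof -
    have "(M+1)*d4 * ((L + M + 2)*(M + 2)*(L + M + 4)*(L + M + 6)) = (M+1)*(d4*(L+M+4))*(L + M + 2)*(M + 2)*(L + M + 6)" by (simp only: mult_ac)
    also have "\<dots> = 2*(M + 1)*(L + M + 2)*(M + 2)*(L + M + 6)" unfolding eqs(4) by (simp only: mult_ac)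
    finally show ?thesis .
  qed
  have t3: "(M+1)*d5*w2 * ((L + M + 2)*(M + 2)*(L + M + 4)*(L + M + 6)) = 4*(M + 1)*(M + 4)*(L + M + 2)"
  proof -
    have "(M+1)*d5*w2 * ((L + M + 2)*(M + 2)*(L + M + 4)*(L + M + 6)) = (M+1)*(d5*((L+M+6)*(L+M+4)))*(w2*(M+2))*(L + M + 2)" by (simp only: mult_ac)
    also have "\<dots> = 4*(M + 1)*(M + 4)*(L + M + 2)" unfolding eqs(5) eqs(6) by (simp only: mult_ac)
    finally show ?thesis .
  qed
  have t4: "G * ((L + M + 2)*(M + 2)*(L + M + 4)*(L + M + 6)) = 4*(L - M + 2)*(L + M + 6)"
  proof -
    have "G * ((L + M + 2)*(M + 2)*(L + M + 4)*(L + M + 6)) = (G*((L+M+2)*(L+M+4)*(M+2)))*(L + M + 6)" by (simp only: mult_ac)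
    also have "\<dots> = 4*(L - M + 2)*(L + M + 6)" unfolding eqs(7) by (simp only: mult_ac)
    finally show ?thesis .
  qed
  have ps: "(2*(M + 3)*(M)*(L + M + 4)*(L + M + 6)) + (4*(M + 3)*(M + 2)*(L + M + 6)) - (2*(M + 1)*(L + M + 2)*(M + 2)*(L + M + 6)) - (4*(M + 1)*(M + 4)*(L + M + 2)) + (4*(L - M + 2)*(L + M + 6)) = (128 + 8*t + 128*u + 4*u*t + 56*u*u + 4*u*u*t + 8*u*u*u)"
    unfolding uM tL by algebra
  have key: "((M+3)*c4*w1 + (M+3)*c5 - (M+1)*d4 - (M+1)*d5*w2 + G) * ((L + M + 2)*(M + 2)*(L + M + 4)*(L + M + 6)) = (128 + 8*t + 128*u + 4*u*t + 56*u*u + 4*u*u*t + 8*u*u*u)"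
    unfolding ps[symmetric] t0[symmetric] t1[symmetric] t2[symmetric] t3[symmetric] t4[symmetric] by (simp only: distrib_right left_diff_distrib)
  have nn: "0 \<le> 128 + 8*t + 128*u + 4*u*t + 56*u*u + 4*u*u*t + 8*u*u*u"
    using u t by (intro add_nonneg_nonneg mult_nonneg_nonneg) auto
  have "0 \<le> ((M+3)*c4*w1 + (M+3)*c5 - (M+1)*d4 - (M+1)*d5*w2 + G) * ((L + M + 2)*(M + 2)*(L + M + 4)*(L + M + 6))" unfolding key by (rule nn)
  thus ?thesis using D0 by (rule aux_ge0)
qed

lemma K3:
  fixes M L c3 w3 d3 :: real
  assumes "1 \<le> M" and "M + 2 \<le> L"
    and eqs: "c3*(L-M+4) = 2" "w3*(M+1) = M-1" "d3*(L-M+2) = 2"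
  shows "(M+3)*c3*w3 - (M+1)*d3 \<le> 0"
proof -
  define u :: real where "u = M - 1"
  define t :: real where "t = L - M - 2"
  have u: "0 \<le> u" and t: "0 \<le> t" using assms(1,2) by (auto simp: u_def t_def)
  have uM: "M = u + 1" and tL: "L = u + t + 3" using assms(1) by (auto simp: u_def t_def)
  have D0: "0 < (L - M + 4)*(M + 1)*(L - M + 2)" using assms(1,2) by (intro mult_pos_pos) auto
  have t0: "(M+3)*c3*w3 * ((L - M + 4)*(M + 1)*(L - M + 2)) = 2*(M + 3)*(M - 1)*(L - M + 2)"
  proof -
    have "(M+3)*c3*w3 * ((L - M + 4)*(M + 1)*(L - M + 2)) = (M+3)*(c3*(L-M+4))*(w3*(M+1))*(L - M + 2)" by (simp only: mult_ac)
    also have "\<dots> = 2*(M + 3)*(M - 1)*(L - M + 2)" unfolding eqs(1) eqs(2) by (simp only: mult_ac)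
    finally show ?thesis .
  qed
  have t1: "(M+1)*d3 * ((L - M + 4)*(M + 1)*(L - M + 2)) = 2*(M + 1)*(L - M + 4)*(M + 1)"
  proof -
    have "(M+1)*d3 * ((L - M + 4)*(M + 1)*(L - M + 2)) = (M+1)*(d3*(L-M+2))*(L - M + 4)*(M + 1)" by (simp only: mult_ac)
    also have "\<dots> = 2*(M + 1)*(L - M + 4)*(M + 1)" unfolding eqs(3) by (simp only: mult_ac)
    finally show ?thesis .
  qed
  have ps: "(2*(M + 3)*(M - 1)*(L - M + 2)) - (2*(M + 1)*(L - M + 4)*(M + 1)) = -(48 + 8*t + 16*u + 4*u*u)"
    unfolding uM tL by algebra
  have key: "((M+3)*c3*w3 - (M+1)*d3) * ((L - M + 4)*(M + 1)*(L - M + 2)) = -(48 + 8*t + 16*u + 4*u*u)"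
    unfolding ps[symmetric] t0[symmetric] t1[symmetric] by (simp only: distrib_right left_diff_distrib)
  have nn: "0 \<le> 48 + 8*t + 16*u + 4*u*u"
    using u t by (intro add_nonneg_nonneg mult_nonneg_nonneg) auto
  have "((M+3)*c3*w3 - (M+1)*d3) * ((L - M + 4)*(M + 1)*(L - M + 2)) \<le> 0" unfolding key using nn by (simp only: neg_le_0_iff_le)
  thus ?thesis using D0 by (rule aux_le0)
qed


lemma aux_coef: fixes x p y :: real shows "x*p = y \<Longrightarrow> 0 < p \<Longrightarrow> 0 \<le> y \<Longrightarrow> 0 \<le> x"
  using aux_ge0[of x p] by simp

lemma aux_y: fixes w p a Q P :: real shows "w*p = a \<Longrightarrow> 0 < p \<Longrightarrow> a*Q \<le> p*P \<Longrightarrow> 0 \<le> P - w*Q"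
proof -
  assume a: "w*p = a" "0 < p" "a*Q \<le> p*P"
  have "(P - w*Q)*p = p*P - (w*p)*Q" by (simp add: algebra_simps)
  also have "\<dots> = p*P - a*Q" by (simp only: a(1))
  finally show ?thesis using a(2,3) aux_coef[of "P - w*Q" p "p*P - a*Q"] by simp
qed

lemma aux_y2: fixes w p a Q P :: real shows "w*p = a \<Longrightarrow> 0 < p \<Longrightarrow> p*P \<le> a*Q \<Longrightarrow> 0 \<le> w*Q - P"
proof -
  assume a: "w*p = a" "0 < p" "p*P \<le> a*Q"
  have "(w*Q - P)*p = (w*p)*Q - p*P" by (simp add: algebra_simps)
  also have "\<dots> = a*Q - p*P" by (simp only: a(1))
  finally show ?thesis using a(2,3) aux_coef[of "w*Q - P" p "a*Q - p*P"] by simp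
qed

lemma step:
  fixes L M c1 c2 c3 c4 c5 d1 d2 d3 d4 d5 Q1m Q1 Q1p Q2m Q2 Q3m Q3 Q3p :: real
  assumes M0: "0 \<le> M" and hLM: "M + 2 \<le> L" and Mcase: "M = 0 \<or> 1 \<le> M"
   and ce: "c1*(L-M+2) = L-M" "c2*(L+M+2) = L-M+2" "c3*(L-M+4) = 2" "c4*(L+M+2) = 2" "c5*((L+M+4)*(L+M+2)) = 4"
   and de: "d1*(L-M) = L-M-2" "d2*(L+M+4) = L-M" "d3*(L-M+2) = 2" "d4*(L+M+4) = 2" "d5*((L+M+6)*(L+M+4)) = 4"
   and nQ: "0 \<le> Q1m" "0 \<le> Q1" "0 \<le> Q1p" "0 \<le> Q2m" "0 \<le> Q2" "0 \<le> Q3m" "0 \<le> Q3" "0 \<le> Q3p"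
   and h1: "M*Q1 \<le> (M+2)*Q1m" and h1p: "(M+2)*Q1p \<le> (M+4)*Q1"
   and h2: "M = 0 \<Longrightarrow> Q2m = 0" and h2': "1 \<le> M \<Longrightarrow> (M-1)*Q2 \<le> (M+1)*Q2m"
   and h3: "M*Q3 \<le> (M+2)*Q3m" and h3p: "(M+2)*Q3p \<le> (M+4)*Q3"
   and dom2: "(L-M)*Q2 \<le> (L-M+2)*Q1" and dom3: "(L-M)*Q3 \<le> (L+M+4)*Q1"
  shows "(M+1)*(d1*Q1 + d2*Q1p + d3*Q2 + d4*Q3 + d5*Q3p) \<le> (M+3)*(c1*Q1m + c2*Q1 + c3*Q2m + c4*Q3m + c5*Q3)"
proof -
  define w1 where "w1 = M/(M+2)"
  define w2 where "w2 = (M+4)/(M+2)"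
  define w3 where "w3 = (M-1)/(M+1)"
  define k2 where "k2 = (L-M+2)/(L-M)"
  define k3 where "k3 = (L+M+4)/(L-M)"
  define G where "G = 4*(L-M+2)/((L+M+2)*(L+M+4)*(M+2))"
  have we1: "w1*(M+2) = M" unfolding w1_def using M0 by simp
  have we2: "w2*(M+2) = M+4" unfolding w2_def using M0 by simp
  have we3: "w3*(M+1) = M-1" unfolding w3_def using M0 by simp
  have ke2: "k2*(L-M) = L-M+2" unfolding k2_def using hLM by simp
  have ke3: "k3*(L-M) = L+M+4" unfolding k3_def using hLM by simp
  have Ge: "G*((L+M+2)*(L+M+4)*(M+2)) = 4*(L-M+2)" unfolding G_def using M0 hLM
    by (simp add: divide_simps)
  have G0: "0 \<le> G" unfolding G_def using M0 hLM by simp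
  have c1p: "0 \<le> c1" by (rule aux_coef[OF ce(1)]) (use hLM in auto)
  have d2p: "0 \<le> d2" by (rule aux_coef[OF de(2)]) (use hLM M0 in auto)
  have c3p: "0 \<le> c3" by (rule aux_coef[OF ce(3)]) (use hLM in auto)
  have c4p: "0 \<le> c4" by (rule aux_coef[OF ce(4)]) (use hLM M0 in auto)
  have d5p: "0 \<le> d5" by (rule aux_coef[OF de(5)]) (use hLM M0 in auto)
  have y1: "0 \<le> Q1m - w1*Q1" by (rule aux_y[OF we1 _ h1]) (use M0 hLM in auto)
  have y2: "0 \<le> w2*Q1 - Q1p" by (rule aux_y2[OF we2 _ h1p]) (use M0 hLM in auto)
  have y4: "0 \<le> Q3m - w1*Q3" by (rule aux_y[OF we1 _ h3]) (use M0 hLM in auto)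
  have y5: "0 \<le> w2*Q3 - Q3p" by (rule aux_y2[OF we2 _ h3p]) (use M0 hLM in auto)
  have y6: "0 \<le> k2*Q1 - Q2" by (rule aux_y2[OF ke2 _ dom2]) (use M0 hLM in auto)
  have y7: "0 \<le> k3*Q1 - Q3" by (rule aux_y2[OF ke3 _ dom3]) (use M0 hLM in auto)
  define A1 where "A1 = (M+3)*c1*w1 + (M+3)*c2 - (M+1)*d1 - (M+1)*d2*w2"
  define A3 where "A3 = (M+3)*c4*w1 + (M+3)*c5 - (M+1)*d4 - (M+1)*d5*w2"
  have X1: "0 \<le> (M+3)*c1*(Q1m - w1*Q1)" using M0 c1p y1 by simp
  have X2: "0 \<le> (M+1)*d2*(w2*Q1 - Q1p)" using M0 d2p y2 by simp
  have X4: "0 \<le> (M+3)*c4*(Q3m - w1*Q3)" using M0 c4p y4 by simp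
  have X5: "0 \<le> (M+1)*d5*(w2*Q3 - Q3p)" using M0 d5p y5 by simp
  have K2': "0 \<le> A3 + G" unfolding A3_def
    by (rule K2[OF M0 hLM ce(4) we1 ce(5) de(4) de(5) we2 Ge])
  have F7: "0 \<le> (A3 + G)*Q3" using K2' nQ(7) by simp
  have F8: "G*Q3 \<le> G*(k3*Q1)" using G0 y7 by (simp add: mult_left_mono)
  show ?thesis
  using Mcase proof
    assume Mz: "M = 0"
    define A2 where "A2 = -((M+1)*d3)"
    have ident: "(M+3)*(c1*Q1m + c2*Q1 + c3*Q2m + c4*Q3m + c5*Q3) - (M+1)*(d1*Q1 + d2*Q1p + d3*Q2 + d4*Q3 + d5*Q3p)
       = (M+3)*c1*(Q1m - w1*Q1) + (M+1)*d2*(w2*Q1 - Q1p) + (M+3)*c3*Q2m + (M+3)*c4*(Q3m - w1*Q3) + (M+1)*d5*(w2*Q3 - Q3p)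
         + A1*Q1 + A2*Q2 + (A3 + G)*Q3 - G*Q3"
      unfolding A1_def A2_def A3_def by (simp add: algebra_simps)
    have X3: "(M+3)*c3*Q2m = 0" using h2[OF Mz] by simp
    have A2n: "A2 \<le> 0" unfolding A2_def
      using aux_coef[OF de(3)] hLM Mz by simp
    have F6: "A2*(k2*Q1) \<le> A2*Q2" using A2n y6 by (simp add: mult_left_mono_neg)
    have K1': "0 \<le> (M+3)*c1*w1 + (M+3)*c2 - (M+1)*d1 - (M+1)*d2*w2 - (M+1)*d3*k2 - G*k3"
      by (rule K1z[OF Mz hLM ce(1) ce(2) de(1) de(2) we1 we2 ke2 de(3) Ge ke3])
    have F9: "0 \<le> ((M+3)*c1*w1 + (M+3)*c2 - (M+1)*d1 - (M+1)*d2*w2 - (M+1)*d3*k2 - G*k3)*Q1"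
      using K1' nQ(2) by simp
    have F9e: "((M+3)*c1*w1 + (M+3)*c2 - (M+1)*d1 - (M+1)*d2*w2 - (M+1)*d3*k2 - G*k3)*Q1
       = A1*Q1 + A2*(k2*Q1) - G*(k3*Q1)"
      unfolding A1_def A2_def by (simp add: algebra_simps)
    show ?thesis using ident X1 X2 X3 X4 X5 F6 F7 F8 F9 F9e by linarith
  next
    assume M1: "1 \<le> M"
    define A2 where "A2 = (M+3)*c3*w3 - (M+1)*d3"
    have y3: "0 \<le> Q2m - w3*Q2" by (rule aux_y[OF we3 _ h2'[OF M1]]) (use M0 in auto)
    have X3: "0 \<le> (M+3)*c3*(Q2m - w3*Q2)" using M0 c3p y3 by simp
    have ident: "(M+3)*(c1*Q1m + c2*Q1 + c3*Q2m + c4*Q3m + c5*Q3) - (M+1)*(d1*Q1 + d2*Q1p + d3*Q2 + d4*Q3 + d5*Q3p)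
       = (M+3)*c1*(Q1m - w1*Q1) + (M+1)*d2*(w2*Q1 - Q1p) + (M+3)*c3*(Q2m - w3*Q2) + (M+3)*c4*(Q3m - w1*Q3) + (M+1)*d5*(w2*Q3 - Q3p)
         + A1*Q1 + A2*Q2 + (A3 + G)*Q3 - G*Q3"
      unfolding A1_def A2_def A3_def by (simp add: algebra_simps)
    have A2n: "A2 \<le> 0" unfolding A2_def
      by (rule K3[OF M1 hLM ce(3) we3 de(3)])
    have F6: "A2*(k2*Q1) \<le> A2*Q2" using A2n y6 by (simp add: mult_left_mono_neg)
    have K1': "0 \<le> (M+3)*c1*w1 + (M+3)*c2 - (M+1)*d1 - (M+1)*d2*w2 + (M+3)*c3*w3*k2 - (M+1)*d3*k2 - G*k3"
      by (rule K1[OF M1 hLM ce(1) ce(2) de(1) de(2) we1 we2 ce(3) we3 ke2 de(3) Ge ke3])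
    have F9: "0 \<le> ((M+3)*c1*w1 + (M+3)*c2 - (M+1)*d1 - (M+1)*d2*w2 + (M+3)*c3*w3*k2 - (M+1)*d3*k2 - G*k3)*Q1"
      using K1' nQ(2) by simp
    have F9e: "((M+3)*c1*w1 + (M+3)*c2 - (M+1)*d1 - (M+1)*d2*w2 + (M+3)*c3*w3*k2 - (M+1)*d3*k2 - G*k3)*Q1
       = A1*Q1 + A2*(k2*Q1) - G*(k3*Q1)"
      unfolding A1_def A2_def by (simp add: algebra_simps)
    show ?thesis using ident X1 X2 X3 X4 X5 F6 F7 F8 F9 F9e by linarith
  qed
qed


lemma mono:
  fixes n l :: nat and m k :: int
  assumes "-2 \<le> m" "m + 2 \<le> int l" "k = m + 2"
  shows "(real_of_int m + 1) * qC l k n \<le> (real_of_int m + 3) * qC l m n"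
  using assms
proof (induction "2*n - l" arbitrary: l m k rule: less_induct)
  case less
  note IH = less.hyps
  have mk: "-2 \<le> m" "m + 2 \<le> int l" "k = m + 2" using less.prems by auto
  show ?case
  proof (cases "m < 0")
    case True
    hence "m = -2 \<or> m = -1" using mk by auto
    thus ?thesis
    proof
      assume "m = -2"
      thus ?thesis using mk qC_nonneg[of 0 l n] by (simp add: qC_neg)
    next
      assume "m = -1"
      thus ?thesis using mk by (simp add: qC_neg)
    qed
  next
    case False
    hence m0: "0 \<le> m" by simp
    show ?thesis
    proof (cases "l < 2*n")
      case False
      have "qC l k n = 0"
      proof (cases "l = 2*n")
        case True thus ?thesis using mk m0 by (simp add: qC_top)
      next
        case False thus ?thesis using \<open>\<not> l < 2*n\<close> by (intro qC_big) auto
      qed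
      moreover have "0 \<le> qC l m n" using mk by (intro qC_nonneg) auto
      moreover have "0 \<le> real_of_int m + 3" using m0 by simp
      ultimately show ?thesis by simp
    next
      case True
      note lt = True
      have IHs: "\<And>l' m' k'. l < l' \<Longrightarrow> -2 \<le> m' \<Longrightarrow> m' + 2 \<le> int l' \<Longrightarrow> k' = m' + 2 \<Longrightarrow>
          (real_of_int m' + 1) * qC l' k' n \<le> (real_of_int m' + 3) * qC l' m' n"
        using IH lt by (metis diff_less_mono2)
      define L where "L = real l"
      define M where "M = real_of_int m"
      define Q1m where "Q1m = qC (l+1) (m-1) n"
      define Q1 where "Q1 = qC (l+1) (m+1) n"
      define Q1p where "Q1p = qC (l+1) (m+3) n"
      define Q2m where "Q2m = qC (l+2) (m-2) n"
      define Q2 where "Q2 = qC (l+2) m n"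
      define Q3m where "Q3m = qC (l+3) (m-1) n"
      define Q3 where "Q3 = qC (l+3) (m+1) n"
      define Q3p where "Q3p = qC (l+3) (m+3) n"
      define c1 where "c1 = real_of_int (int l - m) / real_of_int (int l - m + 2)"
      define c2 where "c2 = real_of_int (int l - m + 2) / real_of_int (int l + m + 2)"
      define c3 where "c3 = 2 / real_of_int (int l - m + 4)"
      define c4 where "c4 = 2 / real_of_int (int l + m + 2)"
      define c5 where "c5 = 4 / (real_of_int (int l + m + 4) * real_of_int (int l + m + 2))"
      define d1 where "d1 = real_of_int (int l - (m+2)) / real_of_int (int l - (m+2) + 2)"
      define d2 where "d2 = real_of_int (int l - (m+2) + 2) / real_of_int (int l + (m+2) + 2)"
      define d3 where "d3 = 2 / real_of_int (int l - (m+2) + 4)"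
      define d4 where "d4 = 2 / real_of_int (int l + (m+2) + 2)"
      define d5 where "d5 = 4 / (real_of_int (int l + (m+2) + 4) * real_of_int (int l + (m+2) + 2))"
      have hLM: "M + 2 \<le> L" using mk unfolding L_def M_def by linarith
      have M0: "0 \<le> M" using m0 unfolding M_def by simp
      have rec1: "qC l m n = c1*Q1m + c2*Q1 + c3*Q2m + c4*Q3m + c5*Q3"
        unfolding c1_def c2_def c3_def c4_def c5_def Q1m_def Q1_def Q2m_def Q3m_def Q3_def
        by (rule qC_rec[OF m0 lt])
      have idx: "m + 2 - 1 = m + 1" "m + 2 + 1 = m + 3" "m + 2 - 2 = m" by simp_all
      have rec2: "qC l (m+2) n = d1*Q1 + d2*Q1p + d3*Q2 + d4*Q3 + d5*Q3p"
        unfolding d1_def d2_def d3_def d4_def d5_def Q1_def Q1p_def Q2_def Q3_def Q3p_def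
        using qC_rec[of "m+2" l n, unfolded idx] m0 lt by simp
      have ce4: "c1*(L-M+2) = L-M" "c2*(L+M+2) = L-M+2" "c3*(L-M+4) = 2" "c4*(L+M+2) = 2"
        using hLM M0 unfolding c1_def c2_def c3_def c4_def L_def M_def by (simp_all add: field_simps)
      have c5e: "c5 = 4/((L+M+4)*(L+M+2))" unfolding c5_def L_def M_def by simp
      have P5: "(L+M+4)*(L+M+2) \<noteq> 0" using hLM M0 by simp
      have ce5: "c5*((L+M+4)*(L+M+2)) = 4" unfolding c5e using P5 by simp
      note ce = ce4 ce5
      have de4: "d1*(L-M) = L-M-2" "d2*(L+M+4) = L-M" "d3*(L-M+2) = 2" "d4*(L+M+4) = 2"
        using hLM M0 unfolding d1_def d2_def d3_def d4_def L_def M_def by (simp_all add: field_simps)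
      have d5e: "d5 = 4/((L+M+6)*(L+M+4))" unfolding d5_def L_def M_def by (simp add: add.assoc)
      have P6: "(L+M+6)*(L+M+4) \<noteq> 0" using hLM M0 by simp
      have de5: "d5*((L+M+6)*(L+M+4)) = 4" unfolding d5e using P6 by simp
      note de = de4 de5
      have nQ: "0 \<le> Q1m" "0 \<le> Q1" "0 \<le> Q1p" "0 \<le> Q2m" "0 \<le> Q2" "0 \<le> Q3m" "0 \<le> Q3" "0 \<le> Q3p"
        unfolding Q1m_def Q1_def Q1p_def Q2m_def Q2_def Q3m_def Q3_def Q3p_def
        using mk by (auto intro!: qC_nonneg)
      have h1: "M*Q1 \<le> (M+2)*Q1m"
      proof -
        have e: "real_of_int (m-1) + 1 = M" "real_of_int (m-1) + 3 = M + 2" unfolding M_def by simp_all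
        have "(real_of_int (m-1) + 1) * qC (l+1) (m+1) n \<le> (real_of_int (m-1) + 3) * qC (l+1) (m-1) n"
          by (rule IHs) (use mk m0 in auto)
        thus ?thesis unfolding e Q1_def Q1m_def by simp
      qed
      have h1p: "(M+2)*Q1p \<le> (M+4)*Q1"
      proof -
        have e: "real_of_int (m+1) + 1 = M + 2" "real_of_int (m+1) + 3 = M + 4" unfolding M_def by simp_all
        have "(real_of_int (m+1) + 1) * qC (l+1) (m+3) n \<le> (real_of_int (m+1) + 3) * qC (l+1) (m+1) n"
          by (rule IHs) (use mk m0 in auto)
        thus ?thesis unfolding e Q1_def Q1p_def by simp
      qed
      have h2: "M = 0 \<Longrightarrow> Q2m = 0" unfolding M_def Q2m_def by (simp add: qC_neg)
      have h2': "1 \<le> M \<Longrightarrow> (M-1)*Q2 \<le> (M+1)*Q2m"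
      proof -
        have e: "real_of_int (m-2) + 1 = M - 1" "real_of_int (m-2) + 3 = M + 1" unfolding M_def by simp_all
        have "(real_of_int (m-2) + 1) * qC (l+2) (m) n \<le> (real_of_int (m-2) + 3) * qC (l+2) (m-2) n"
          by (rule IHs) (use mk m0 in auto)
        thus ?thesis unfolding e Q2_def Q2m_def by simp
      qed
      have h3: "M*Q3 \<le> (M+2)*Q3m"
      proof -
        have e: "real_of_int (m-1) + 1 = M" "real_of_int (m-1) + 3 = M + 2" unfolding M_def by simp_all
        have "(real_of_int (m-1) + 1) * qC (l+3) (m+1) n \<le> (real_of_int (m-1) + 3) * qC (l+3) (m-1) n"
          by (rule IHs) (use mk m0 in auto)
        thus ?thesis unfolding e Q3_def Q3m_def by simp
      qed
      have h3p: "(M+2)*Q3p \<le> (M+4)*Q3"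
      proof -
        have e: "real_of_int (m+1) + 1 = M + 2" "real_of_int (m+1) + 3 = M + 4" unfolding M_def by simp_all
        have "(real_of_int (m+1) + 1) * qC (l+3) (m+3) n \<le> (real_of_int (m+1) + 3) * qC (l+3) (m+1) n"
          by (rule IHs) (use mk m0 in auto)
        thus ?thesis unfolding e Q3_def Q3p_def by simp
      qed
      have dom2: "(L-M)*Q2 \<le> (L-M+2)*Q1"
        using domA[of "m+1" "l+1" n] m0 mk unfolding L_def M_def Q1_def Q2_def by (simp add: algebra_simps)
      have dB: "(L-M+2)*qC (l+2) (m+2) n \<le> (L+M+4)*Q1"
        using domB[of "m+1" "l+1" n] m0 mk unfolding L_def M_def Q1_def by (simp add: algebra_simps)
      have dA: "(L-M)*Q3 \<le> (L-M+2)*qC (l+2) (m+2) n"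
      proof -
        have e: "real_of_int (int (l+2) - (m+2)) = L - M" "real_of_int (int (l+2) - (m+2) + 2) = L - M + 2"
          "l + 2 + 1 = l + 3" "m + 2 - 1 = m + 1" unfolding L_def M_def by simp_all
        have "real_of_int (int (l+2) - (m+2)) * qC (l+2+1) (m+2-1) n \<le> real_of_int (int (l+2) - (m+2) + 2) * qC (l+2) (m+2) n"
          by (rule domA) (use m0 mk in auto)
        thus ?thesis unfolding e Q3_def .
      qed
      have dom3: "(L-M)*Q3 \<le> (L+M+4)*Q1" using dA dB by linarith
      have Mcase: "M = 0 \<or> 1 \<le> M" using m0 unfolding M_def by (cases "m = 0") auto
      have st: "(M+1)*(d1*Q1 + d2*Q1p + d3*Q2 + d4*Q3 + d5*Q3p) \<le> (M+3)*(c1*Q1m + c2*Q1 + c3*Q2m + c4*Q3m + c5*Q3)"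
        by (rule step[OF M0 hLM Mcase ce de nQ h1 h1p h2 h2' h3 h3p dom2 dom3])
      show ?thesis using st unfolding rec1 mk(3) rec2 M_def .
    qed
  qed
qed


lemma ratio_step:
  fixes n l :: nat and m :: int
  assumes "0 \<le> m" "m + 2 \<le> int l"
  shows "qC l (m+2) n / real_of_int (m + 2 + 1) \<le> qC l m n / real_of_int (m + 1)"
proof -
  have h: "(real_of_int m + 1) * qC l (m+2) n \<le> (real_of_int m + 3) * qC l m n"
    by (rule mono) (use assms in auto)
  have p1: "0 < real_of_int m + 1" using assms by simp
  have p3: "0 < real_of_int m + 3" using assms by simp
  have e: "real_of_int (m + 2 + 1) = real_of_int m + 3" "real_of_int (m + 1) = real_of_int m + 1" by simp_all
  show ?thesis unfolding e using h p1 p3 by (simp add: divide_simps mult.commute)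
qed

lemma chain:
  fixes n l p :: nat and j :: int
  assumes "0 \<le> j" "j + 2 * int p \<le> int l"
  shows "qC l (j + 2 * int p) n / real_of_int (j + 2 * int p + 1) \<le> qC l j n / real_of_int (j + 1)"
  using assms
proof (induction p)
  case 0 thus ?case by simp
next
  case (Suc p)
  have a: "qC l (j + 2 * int p + 2) n / real_of_int (j + 2 * int p + 2 + 1) \<le> qC l (j + 2 * int p) n / real_of_int (j + 2 * int p + 1)"
    by (rule ratio_step) (use Suc.prems in auto)
  have b: "qC l (j + 2 * int p) n / real_of_int (j + 2 * int p + 1) \<le> qC l j n / real_of_int (j + 1)"
    by (rule Suc.IH) (use Suc.prems in auto)
  have e: "j + 2 * int (Suc p) = j + 2 * int p + 2" by simp
  show ?case unfolding e using a b by linarith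
qed

theorem lemma5p4:
  fixes n l :: nat and j k :: int
  assumes "n \<ge> 10" and "0 \<le> j" and "j < k" and "k \<le> int l" and "l \<le> 2 * n"
    and "even (k - j)"
  shows "qC l j n / real_of_int (j + 1) \<ge> qC l k n / real_of_int (k + 1)"
proof -
  obtain q where q: "k - j = 2 * q" using assms(6) by (rule evenE)
  have q0: "0 \<le> q" using q assms(3) by linarith
  define p where "p = nat q"
  have kp: "k = j + 2 * int p" using q q0 unfolding p_def by simp
  show ?thesis unfolding kp by (rule chain) (use assms kp in auto)
qed

end
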